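(* For Global SEMO (standard mutation, fitness $f=(Cost,LP)$) on the weighted vertex cover problem, the search point $0^n$ is included in the population in expected time $O\big(OPT\cdot n(\log W_{max}+\log n)\big)$.
   Context: Weighted vertex cover: $G=(V,E)$, $V=\{v_1,\dots,v_n\}$, $w:V\to\mathbb{N}^+$, $W_{max}=\max_v w(v)$; $OPT$ is the minimum weight of a vertex cover. Search points $x\in\{0,1\}^n$; $Cost(x)=\sum_i w(v_i)x_i$; $G(x)$ is $G$ with selected vertices and edges having a selected endpoint removed; $LP(x)$ is the optimal value of: minimize $\sum_{v_i\in V(x)}w(v_i)y_i$ s.t. $y_i+y_j\ge1$ for edges $\{v_i,v_j\}$ of $G(x)$, $0\le y_i\le1$. $f(x)\le f(y)$ means componentwise $\le$. Global SEMO: start with a uniformly random $x$, $P=\{x\}$; each iteration choose $x\in P$ uniformly at random, create $x'$ by flipping each bit independently with probability $1/n$; if no $y\in P$ has $f(y)\le f(x')$, add $x'$ to $P$ and delete all other $z\in P$ with $f(x')\le f(z)$. Time = number of iterations. *)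

theory Defs
  imports "HOL-Probability.Probability"
begin

text \<open>Weighted vertex cover instances. Vertices are 0..n-1 (vertex v_{i+1} is index i),
  edges are 2-element subsets of {0..<n}, weights are positive naturals.\<close>

definition wvc_instance :: "nat \<Rightarrow> nat set set \<Rightarrow> (nat \<Rightarrow> nat) \<Rightarrow> bool" where
  "wvc_instance n E w \<longleftrightarrow>
     (\<forall>e\<in>E. e \<subseteq> {0..<n} \<and> card e = 2) \<and> (\<forall>i<n. 0 < w i)"

definition is_vertex_cover :: "nat \<Rightarrow> nat set set \<Rightarrow> nat set \<Rightarrow> bool" where
  "is_vertex_cover n E C \<longleftrightarrow> C \<subseteq> {0..<n} \<and> (\<forall>e\<in>E. e \<inter> C \<noteq> {})"

definition OPT :: "nat \<Rightarrow> nat set set \<Rightarrow> (nat \<Rightarrow> nat) \<Rightarrow> nat" where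
  "OPT n E w = Min {sum w C | C. is_vertex_cover n E C}"

definition Wmax :: "nat \<Rightarrow> (nat \<Rightarrow> nat) \<Rightarrow> nat" where
  "Wmax n w = Max (w ` {0..<n})"

text \<open>Search points are bit strings of length n; bit i selects vertex i.\<close>

definition Cost :: "nat \<Rightarrow> (nat \<Rightarrow> nat) \<Rightarrow> bool list \<Rightarrow> real" where
  "Cost n w x = (\<Sum>i<n. real (w i) * (if x ! i then 1 else 0))"

text \<open>Feasible fractional solutions of the LP relaxation on G(x): variables y_i for the
  unselected vertices, one covering constraint per edge with no selected endpoint.\<close>

definition LP_feasible :: "nat \<Rightarrow> nat set set \<Rightarrow> bool list \<Rightarrow> (nat \<Rightarrow> real) \<Rightarrow> bool" where
  "LP_feasible n E x y \<longleftrightarrow>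
     (\<forall>i<n. \<not> x ! i \<longrightarrow> 0 \<le> y i \<and> y i \<le> 1) \<and>
     (\<forall>i j. {i, j} \<in> E \<and> \<not> x ! i \<and> \<not> x ! j \<longrightarrow> y i + y j \<ge> 1)"

definition LP :: "nat \<Rightarrow> nat set set \<Rightarrow> (nat \<Rightarrow> nat) \<Rightarrow> bool list \<Rightarrow> real" where
  "LP n E w x = Inf {(\<Sum>i\<in>{i. i < n \<and> \<not> x ! i}. real (w i) * y i) | y. LP_feasible n E x y}"

definition fit :: "nat \<Rightarrow> nat set set \<Rightarrow> (nat \<Rightarrow> nat) \<Rightarrow> bool list \<Rightarrow> real \<times> real" where
  "fit n E w x = (Cost n w x, LP n E w x)"

definition fle :: "real \<times> real \<Rightarrow> real \<times> real \<Rightarrow> bool" where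
  "fle a b \<longleftrightarrow> fst a \<le> fst b \<and> snd a \<le> snd b"

fun mutate :: "real \<Rightarrow> bool list \<Rightarrow> bool list pmf" where
  "mutate p [] = return_pmf []"
| "mutate p (b # bs) =
     bind_pmf (bernoulli_pmf p) (\<lambda>c. map_pmf (\<lambda>r. (if c then \<not> b else b) # r) (mutate p bs))"

definition init_pmf :: "nat \<Rightarrow> bool list pmf" where
  "init_pmf n = pmf_of_set {x. length x = n}"

definition semo_step :: "nat \<Rightarrow> nat set set \<Rightarrow> (nat \<Rightarrow> nat) \<Rightarrow> bool list set \<Rightarrow> bool list set pmf" where
  "semo_step n E w P =
     bind_pmf (pmf_of_set P) (\<lambda>x.
     map_pmf (\<lambda>x'. if (\<exists>y\<in>P. fle (fit n E w y) (fit n E w x')) then P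
                   else insert x' {z \<in> P. \<not> fle (fit n E w x') (fit n E w z)})
       (mutate (1 / real n) x))"

text \<open>Process stopped once 0^n is in the population (does not change the hitting time).\<close>

definition zeros :: "nat \<Rightarrow> bool list" where
  "zeros n = replicate n False"

definition stopped_step :: "nat \<Rightarrow> nat set set \<Rightarrow> (nat \<Rightarrow> nat) \<Rightarrow> bool list set \<Rightarrow> bool list set pmf" where
  "stopped_step n E w P = (if zeros n \<in> P then return_pmf P else semo_step n E w P)"

fun semo_run :: "nat \<Rightarrow> nat set set \<Rightarrow> (nat \<Rightarrow> nat) \<Rightarrow> nat \<Rightarrow> bool list set pmf" where
  "semo_run n E w 0 = map_pmf (\<lambda>x. {x}) (init_pmf n)"
| "semo_run n E w (Suc t) = bind_pmf (semo_run n E w t) (stopped_step n E w)"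

text \<open>Expected hitting time T = min{t. 0^n \<in> P_t}, via E[T] = sum_t Pr[T > t].\<close>

definition expected_time_zeros :: "nat \<Rightarrow> nat set set \<Rightarrow> (nat \<Rightarrow> nat) \<Rightarrow> ennreal" where
  "expected_time_zeros n E w =
     (\<Sum>t. ennreal (measure_pmf.prob (semo_run n E w t) {P. zeros n \<notin> P}))"

end

theory Submission
  imports Defs
begin


definition UU :: "nat \<Rightarrow> bool list \<Rightarrow> nat set" where "UU n x = {i. i < n \<and> \<not> x ! i}"
definition val :: "nat \<Rightarrow> (nat \<Rightarrow> nat) \<Rightarrow> bool list \<Rightarrow> (nat \<Rightarrow> real) \<Rightarrow> real" where
  "val n w x y = (\<Sum>i\<in>UU n x. real (w i) * y i)"
definition bad :: "nat \<Rightarrow> bool list \<Rightarrow> (nat \<Rightarrow> real) \<Rightarrow> nat set" where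
  "bad n x y = {i\<in>UU n x. y i \<notin> {0, 1/2, 1}}"

lemma finite_UU[simp]: "finite (UU n x)" unfolding UU_def by auto
lemma finite_bad[simp]: "finite (bad n x y)" unfolding bad_def by auto

lemma round_step:
  assumes edges: "\<forall>e\<in>E. e \<subseteq> {0..<n}"
    and feas: "LP_feasible n E x y" and ne: "bad n x y \<noteq> {}"
  shows "\<exists>y'. LP_feasible n E x y' \<and> val n w x y' \<le> val n w x y \<and> bad n x y' \<subset> bad n x y"
proof -
  define B where "B = bad n x y"
  have BU: "B \<subseteq> UU n x" unfolding B_def bad_def by auto
  have rng: "\<And>i. i \<in> UU n x \<Longrightarrow> 0 \<le> y i \<and> y i \<le> 1"
    using feas unfolding LP_feasible_def UU_def by auto
  define d :: "nat \<Rightarrow> real" where "d i = (if i \<in> B then (if y i < 1/2 then 1 else -1) else 0)" for i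
  define D where "D = (\<Sum>i\<in>UU n x. real (w i) * d i)"
  define s :: real where "s = (if D \<le> 0 then 1 else -1)"
  have sD: "s * D \<le> 0" unfolding s_def by auto
  define gap where "gap i = (if s * d i > 0 then (if y i < 1/2 then 1/2 - y i else 1 - y i)
                             else (if y i < 1/2 then y i else y i - 1/2))" for i
  have Bfin: "finite B" unfolding B_def by simp
  have Bne: "B \<noteq> {}" using ne B_def by simp
  have gap_pos: "gap i > 0" if "i \<in> B" for i
  proof -
    have "0 \<le> y i" "y i \<le> 1" "y i \<noteq> 0" "y i \<noteq> 1/2" "y i \<noteq> 1"
      using that rng BU unfolding B_def bad_def by auto
    then show ?thesis unfolding gap_def by auto
  qed
  define eps where "eps = Min (gap ` B)"
  have eps_pos: "eps > 0" unfolding eps_def using Bfin Bne gap_pos by auto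
  have eps_le: "eps \<le> gap i" if "i \<in> B" for i unfolding eps_def using Bfin that by auto
  obtain i0 where i0: "i0 \<in> B" "gap i0 = eps" unfolding eps_def using Bfin Bne
    by (metis (mono_tags, lifting) Min_in finite_imageI image_iff image_is_empty)
  define y' where "y' i = y i + s * eps * d i" for i
  have s_cases: "s = 1 \<or> s = -1" unfolding s_def by auto
  have outside: "y' i = y i" if "i \<notin> B" for i using that unfolding y'_def d_def by auto
  have lowB: "0 \<le> y' i \<and> y' i \<le> 1/2" if "i \<in> B" "y i < 1/2" for i
  proof -
    have "0 \<le> y i" using that rng BU by auto
    moreover have "eps \<le> gap i" using eps_le that by auto
    moreover have di: "d i = 1" using that by (simp add: d_def)
    ultimately show ?thesis using s_cases eps_pos that
      by (elim disjE) (simp_all add: y'_def gap_def)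
  qed
  have highB: "1/2 \<le> y' i \<and> y' i \<le> 1" if "i \<in> B" "\<not> y i < 1/2" for i
  proof -
    have "y i \<le> 1" using that rng BU by auto
    moreover have "eps \<le> gap i" using eps_le that by auto
    moreover have di: "d i = -1" using that by (simp add: d_def)
    ultimately show ?thesis using s_cases eps_pos that
      by (elim disjE) (simp_all add: y'_def gap_def)
  qed
  have hit: "y' i0 \<in> {0, 1/2, 1}"
  proof (cases "y i0 < 1/2")
    case True
    then have "d i0 = 1" using i0 by (simp add: d_def)
    then show ?thesis using s_cases i0 True by (elim disjE) (simp_all add: y'_def gap_def)
  next
    case False
    then have "d i0 = -1" using i0 by (simp add: d_def)
    then show ?thesis using s_cases i0 False by (elim disjE) (simp_all add: y'_def gap_def)
  qed
  have mixed: "y' i + y' j = y i + y j" if "i \<in> B" "j \<in> B" "y i < 1/2" "\<not> y j < 1/2" for i j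
    using that unfolding y'_def d_def by auto
  have badB: "i \<in> B \<Longrightarrow> y i \<noteq> 0 \<and> y i \<noteq> 1/2 \<and> y i \<noteq> 1" for i
    unfolding B_def bad_def by auto
  have feas': "LP_feasible n E x y'"
    unfolding LP_feasible_def
  proof (intro conjI allI impI)
    fix i assume "i < n" "\<not> x ! i"
    then have iU: "i \<in> UU n x" unfolding UU_def by auto
    have "0 \<le> y' i \<and> y' i \<le> 1"
    proof (cases "i \<in> B")
      case True
      then show ?thesis using lowB[OF True] highB[OF True] by (cases "y i < 1/2") auto
    next
      case False
      then show ?thesis using outside[OF False] rng[OF iU] by simp
    qed
    then show "0 \<le> y' i" "y' i \<le> 1" by auto
  next
    fix i j assume a: "{i, j} \<in> E \<and> \<not> x ! i \<and> \<not> x ! j"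
    then have old: "y i + y j \<ge> 1" using feas unfolding LP_feasible_def by auto
    have "i < n" "j < n" using a edges by auto
    then have iU: "i \<in> UU n x" and jU: "j \<in> UU n x" using a unfolding UU_def by auto
    note ri = rng[OF iU] and rj = rng[OF jU]
    show "y' i + y' j \<ge> 1"
    proof (cases "i \<in> B")
      case iB: True
      show ?thesis
      proof (cases "j \<in> B")
        case jB: True
        show ?thesis
        proof (cases "y i < 1/2")
          case ilo: True
          show ?thesis
          proof (cases "y j < 1/2")
            case True then show ?thesis using ilo old by linarith
          next
            case False then show ?thesis using mixed[OF iB jB ilo False] old by linarith
          qed
        next
          case ihi: False
          show ?thesis
          proof (cases "y j < 1/2")
            case True then show ?thesis using mixed[OF jB iB True ihi] old by linarith
          next
            case False then show ?thesis using highB[OF iB ihi] highB[OF jB False] by linarith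
          qed
        qed
      next
        case jB: False
        have jv: "y j = 0 \<or> y j = 1/2 \<or> y j = 1" using jB jU unfolding B_def bad_def by auto
        show ?thesis
        proof (cases "y i < 1/2")
          case True
          then have "y j = 1" using jv old by auto
          then show ?thesis using lowB[OF iB True] outside[OF jB] by simp
        next
          case False
          then have "y j \<ge> 1/2" using jv old badB[OF iB] ri by auto
          then show ?thesis using highB[OF iB False] outside[OF jB] by simp
        qed
      qed
    next
      case iB: False
      have iv: "y i = 0 \<or> y i = 1/2 \<or> y i = 1" using iB iU unfolding B_def bad_def by auto
      show ?thesis
      proof (cases "j \<in> B")
        case jB: True
        show ?thesis
        proof (cases "y j < 1/2")
          case True
          then have "y i = 1" using iv old by auto
          then show ?thesis using lowB[OF jB True] outside[OF iB] by simp
        next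
          case False
          then have "y i \<ge> 1/2" using iv old badB[OF jB] rj by auto
          then show ?thesis using highB[OF jB False] outside[OF iB] by simp
        qed
      next
        case jB: False
        then show ?thesis using outside[OF iB] outside[OF jB] old by simp
      qed
    qed
  qed
  have "val n w x y' = val n w x y + s * eps * D"
    unfolding val_def y'_def D_def by (simp add: algebra_simps sum.distrib sum_distrib_left)
  moreover have "s * eps * D \<le> 0" using sD eps_pos
    by (metis mult.commute mult.left_commute mult_nonneg_nonpos less_eq_real_def)
  ultimately have v: "val n w x y' \<le> val n w x y" by simp
  have sub: "bad n x y' \<subset> bad n x y"
  proof -
    have "bad n x y' \<subseteq> B" unfolding bad_def B_def using outside unfolding B_def bad_def by auto
    moreover have "i0 \<notin> bad n x y'" using hit unfolding bad_def by auto
    ultimately show ?thesis using i0 B_def by auto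
  qed
  show ?thesis using feas' v sub by blast
qed

lemma round:
  assumes edges: "\<forall>e\<in>E. e \<subseteq> {0..<n}" and feas: "LP_feasible n E x y"
  shows "\<exists>y'. LP_feasible n E x y' \<and> val n w x y' \<le> val n w x y \<and> bad n x y' = {}"
  using feas
proof (induction "card (bad n x y)" arbitrary: y rule: less_induct)
  case less
  show ?case
  proof (cases "bad n x y = {}")
    case True then show ?thesis using less.prems by blast
  next
    case False
    obtain y' where y': "LP_feasible n E x y'" "val n w x y' \<le> val n w x y" "bad n x y' \<subset> bad n x y"
      using round_step[OF edges less.prems False] by blast
    have "card (bad n x y') < card (bad n x y)" using y'(3) by (simp add: psubset_card_mono)
    from less.hyps[OF this y'(1)] y'(2) show ?thesis by force
  qed
qed


lemma OPT_props:
  assumes inst: "wvc_instance n E w" and ne: "E \<noteq> {}"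
  shows "\<exists>C. is_vertex_cover n E C \<and> sum w C = OPT n E w" and "OPT n E w \<ge> 1"
proof -
  have fin: "finite {C. is_vertex_cover n E C}"
    by (rule finite_subset[of _ "Pow {0..<n}"]) (auto simp: is_vertex_cover_def)
  have cov: "is_vertex_cover n E {0..<n}"
    using inst unfolding is_vertex_cover_def wvc_instance_def
    by (metis Int_absorb2 card.empty zero_neq_numeral order_refl)
  have eq: "{sum w C | C. is_vertex_cover n E C} = sum w ` {C. is_vertex_cover n E C}" by auto
  have "OPT n E w \<in> sum w ` {C. is_vertex_cover n E C}"
    unfolding OPT_def eq using fin cov by (intro Min_in) auto
  then show ex: "\<exists>C. is_vertex_cover n E C \<and> sum w C = OPT n E w" by auto
  then obtain C where C: "is_vertex_cover n E C" "sum w C = OPT n E w" by blast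
  obtain e where e: "e \<in> E" using ne by auto
  then obtain i where i: "i \<in> e" "i \<in> C" using C(1) unfolding is_vertex_cover_def by auto
  have iC: "i < n" using i C(1) unfolding is_vertex_cover_def by auto
  have finC: "finite C" using C(1) unfolding is_vertex_cover_def by (meson finite_atLeastLessThan finite_subset)
  have "w i \<le> sum w C" using finC i(2) by (simp add: member_le_sum)
  moreover have "w i > 0" using inst iC unfolding wvc_instance_def by auto
  ultimately show "OPT n E w \<ge> 1" using C(2) by linarith
qed

lemma LP_half:
  assumes inst: "wvc_instance n E w" and ne: "E \<noteq> {}"
  shows "\<exists>k::nat. LP n E w x = real k / 2 \<and> k \<le> 2 * OPT n E w"
proof -
  have edges: "\<forall>e\<in>E. e \<subseteq> {0..<n}" using inst unfolding wvc_instance_def by auto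
  define V where "V = {val n w x y | y. LP_feasible n E x y}"
  have LPV: "LP n E w x = Inf V" unfolding LP_def V_def val_def UU_def by simp
  have nonneg: "v \<ge> 0" if "v \<in> V" for v
  proof -
    obtain y where y: "LP_feasible n E x y" "v = val n w x y" using \<open>v \<in> V\<close> V_def by auto
    show ?thesis unfolding y(2) val_def
      using y(1) unfolding LP_feasible_def UU_def by (intro sum_nonneg) auto
  qed
  have bdd: "bdd_below V" using nonneg by (meson bdd_below.I)
  have hi: "\<exists>k::nat. val n w x y = real k / 2" if "bad n x y = {}" for y
  proof -
    define c :: "nat \<Rightarrow> nat" where "c i = (if y i = 0 then 0 else if y i = 1/2 then 1 else 2)" for i
    have yc: "y i = real (c i) / 2" if "i \<in> UU n x" for i
      using \<open>bad n x y = {}\<close> that unfolding bad_def c_def by auto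
    have "val n w x y = (\<Sum>i\<in>UU n x. real (w i) * (real (c i) / 2))"
      unfolding val_def using yc by (intro sum.cong) auto
    also have "\<dots> = real (\<Sum>i\<in>UU n x. w i * c i) / 2"
      by (simp add: sum_divide_distrib)
    finally show ?thesis by blast
  qed
  define K where "K = {k::nat. real k / 2 \<in> V}"
  have inK: "\<exists>k\<in>K. real k / 2 \<le> v" if "v \<in> V" for v
  proof -
    obtain y where y: "LP_feasible n E x y" "v = val n w x y" using \<open>v \<in> V\<close> V_def by auto
    obtain y' where y': "LP_feasible n E x y'" "val n w x y' \<le> val n w x y" "bad n x y' = {}"
      using round[OF edges y(1)] by blast
    obtain k where k: "val n w x y' = real k / 2" using hi[OF y'(3)] by blast
    have "k \<in> K" unfolding K_def V_def using y'(1) k by force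
    moreover have "real k / 2 \<le> v" using k y y' by simp
    ultimately show ?thesis by blast
  qed
  have feas1: "LP_feasible n E x (\<lambda>_. 1)" unfolding LP_feasible_def by auto
  then have "val n w x (\<lambda>_. 1) \<in> V" unfolding V_def by blast
  then obtain k1 where "k1 \<in> K" using inK by blast
  define k0 where "k0 = (LEAST k. k \<in> K)"
  have k0K: "k0 \<in> K" unfolding k0_def using \<open>k1 \<in> K\<close> by (rule LeastI)
  have LPk: "LP n E w x = real k0 / 2"
    unfolding LPV
  proof (rule cInf_eq_minimum)
    show "real k0 / 2 \<in> V" using k0K K_def by auto
    fix v assume "v \<in> V"
    then obtain k where "k \<in> K" "real k / 2 \<le> v" using inK by blast
    moreover have "k0 \<le> k" unfolding k0_def using \<open>k \<in> K\<close> by (rule Least_le)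
    ultimately show "real k0 / 2 \<le> v" by linarith
  qed
  obtain C where C: "is_vertex_cover n E C" "sum w C = OPT n E w" using OPT_props[OF inst ne] by blast
  define yC :: "nat \<Rightarrow> real" where "yC i = (if i \<in> C then 1 else 0)" for i
  have feasC: "LP_feasible n E x yC"
    unfolding LP_feasible_def
  proof (intro conjI allI impI)
    fix i j assume "{i, j} \<in> E \<and> \<not> x ! i \<and> \<not> x ! j"
    then have "{i,j} \<inter> C \<noteq> {}" using C(1) unfolding is_vertex_cover_def by auto
    then show "1 \<le> yC i + yC j" unfolding yC_def by auto
  qed (auto simp: yC_def)
  have finC: "finite C" using C(1) unfolding is_vertex_cover_def by (meson finite_atLeastLessThan finite_subset)
  have "val n w x yC = (\<Sum>i\<in>UU n x \<inter> C. real (w i))"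
    unfolding val_def yC_def by (simp add: sum.inter_restrict if_distrib cong: if_cong)
  also have "\<dots> \<le> (\<Sum>i\<in>C. real (w i))" using finC by (intro sum_mono2) auto
  also have "\<dots> = real (OPT n E w)" using C(2) by (metis of_nat_sum)
  finally have "val n w x yC \<le> real (OPT n E w)" .
  moreover have "LP n E w x \<le> val n w x yC" unfolding LPV
    using bdd feasC unfolding V_def by (intro cInf_lower) auto
  ultimately have "real k0 / 2 \<le> real (OPT n E w)" using LPk by simp
  then have "k0 \<le> 2 * OPT n E w" by linarith
  then show ?thesis using LPk by blast
qed




lemma mutate_len: "y \<in> set_pmf (mutate p x) \<Longrightarrow> length y = length x"
  by (induction x arbitrary: y) auto

lemma pmf_map_Cons: "pmf (map_pmf ((#) a) M) (c # ys) = (if a = c then pmf M ys else 0)"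
proof (cases "a = c")
  case True
  have "inj ((#) a)" by (auto simp: inj_def)
  then show ?thesis using True by (simp add: pmf_map_inj')
next
  case False
  then show ?thesis by (auto simp: pmf_eq_0_set_pmf)
qed

lemma pmf_mutate:
  assumes p: "0 \<le> p" "p \<le> 1"
  shows "length y = length x \<Longrightarrow> pmf (mutate p x) y = (\<Prod>k<length x. if x ! k = y ! k then 1 - p else p)"
proof (induction x arbitrary: y)
  case Nil then show ?case by simp
next
  case (Cons b bs)
  then obtain c ys where y: "y = c # ys" and len: "length ys = length bs" by (cases y) auto
  have "pmf (mutate p (b # bs)) y =
      (\<integral>t. pmf (map_pmf (\<lambda>r. (if t then \<not> b else b) # r) (mutate p bs)) (c # ys) \<partial>measure_pmf (bernoulli_pmf p))"
    by (simp add: y pmf_bind)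
  also have "\<dots> = (\<Sum>t\<in>UNIV. pmf (bernoulli_pmf p) t * pmf (map_pmf ((#) (if t then \<not> b else b)) (mutate p bs)) (c # ys))"
    by (subst integral_measure_pmf[of UNIV]) (auto simp: mult.commute)
  also have "\<dots> = (if b = c then 1 - p else p) * pmf (mutate p bs) ys"
    using p by (auto simp: UNIV_bool pmf_map_Cons)
  also have "\<dots> = (if b = c then 1 - p else p) * (\<Prod>k<length bs. if bs ! k = ys ! k then 1 - p else p)"
    using Cons.IH[OF len] by simp
  also have "\<dots> = (\<Prod>k<length (b # bs). if (b # bs) ! k = y ! k then 1 - p else p)"
    by (simp add: y prod.lessThan_Suc_shift del: prod.lessThan_Suc)
  finally show ?case .
qed

lemma finite_len: "finite {y :: bool list. length y = n}"
  using finite_lists_length_eq[of "UNIV :: bool set" n] by simp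

lemma pmf_flip:
  assumes p: "0 \<le> p" "p \<le> 1" and i: "i < length x" and xi: "x ! i"
  shows "pmf (mutate p x) (x[i := False]) = p * (1 - p) ^ (length x - 1)"
proof -
  have "pmf (mutate p x) (x[i := False]) = (\<Prod>k<length x. if k = i then p else 1 - p)"
    using pmf_mutate[OF p, of "x[i := False]" x] i xi
    by (simp add: nth_list_update) (intro prod.cong, auto)
  also have "\<dots> = p * (\<Prod>k\<in>{..<length x} - {i}. 1 - p)"
    using i by (subst prod.remove[of _ i]) auto
  also have "\<dots> = p * (1 - p) ^ (length x - 1)" using i by simp
  finally show ?thesis .
qed




definition costN :: "nat \<Rightarrow> (nat \<Rightarrow> nat) \<Rightarrow> bool list \<Rightarrow> nat" where
  "costN n w x = (\<Sum>i<n. if x ! i then w i else 0)"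
definition Phi :: "nat \<Rightarrow> (nat \<Rightarrow> nat) \<Rightarrow> bool list set \<Rightarrow> nat" where
  "Phi n w P = Min (costN n w ` P)"
definition popinv :: "nat \<Rightarrow> nat set set \<Rightarrow> (nat \<Rightarrow> nat) \<Rightarrow> bool list set \<Rightarrow> bool" where
  "popinv n E w P \<longleftrightarrow> finite P \<and> P \<noteq> {} \<and> (\<forall>x\<in>P. length x = n) \<and>
     (\<forall>y\<in>P. \<forall>z\<in>P. y \<noteq> z \<longrightarrow> \<not> fle (fit n E w y) (fit n E w z))"
definition gg :: "nat \<Rightarrow> nat set set \<Rightarrow> (nat \<Rightarrow> nat) \<Rightarrow> bool list set \<Rightarrow> bool list \<Rightarrow> bool list set" where
  "gg n E w P x' = (if (\<exists>y\<in>P. fle (fit n E w y) (fit n E w x')) then P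
                   else insert x' {z \<in> P. \<not> fle (fit n E w x') (fit n E w z)})"

lemma semo_step_gg: "semo_step n E w P = bind_pmf (pmf_of_set P) (\<lambda>x. map_pmf (gg n E w P) (mutate (1 / real n) x))"
  unfolding semo_step_def gg_def by simp

lemma Cost_eq: "Cost n w x = real (costN n w x)"
  unfolding Cost_def costN_def by (simp add: of_nat_sum if_distrib cong: if_cong)

lemma fle_cost: "fle (fit n E w y) (fit n E w z) \<Longrightarrow> costN n w y \<le> costN n w z"
  unfolding fle_def fit_def by (simp add: Cost_eq)

lemma costN_zeros: "costN n w (zeros n) = 0"
  unfolding costN_def zeros_def by simp

lemma costN_zero_iff:
  assumes "\<forall>i<n. 0 < w i" "length x = n" "costN n w x = 0" shows "x = zeros n"
proof (rule nth_equalityI)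
  show "length x = length (zeros n)" using assms by (simp add: zeros_def)
  fix i assume "i < length x"
  then have "i < n" using assms by simp
  have "(if x ! i then w i else 0) = 0" using assms(3) \<open>i < n\<close> unfolding costN_def by simp
  then show "x ! i = zeros n ! i" using assms(1) \<open>i < n\<close> by (auto simp: zeros_def split: if_splits)
qed

lemma costN_le: "costN n w x \<le> n * Wmax n w"
proof -
  have "costN n w x \<le> (\<Sum>i<n. Wmax n w)" unfolding costN_def
    by (intro sum_mono) (auto simp: Wmax_def intro!: Max_ge)
  then show ?thesis by simp
qed

lemma costN_flip:
  assumes "i < n" "x ! i" "length x = n" shows "costN n w (x[i := False]) + w i = costN n w x"
proof -
  have "costN n w x = w i + (\<Sum>k\<in>{..<n} - {i}. if x ! k then w k else 0)"
    unfolding costN_def using assms by (subst sum.remove[of _ i]) auto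
  moreover have "costN n w (x[i := False]) = (\<Sum>k\<in>{..<n} - {i}. if x ! k then w k else 0)"
    unfolding costN_def using assms
    by (subst sum.remove[of _ i]) (auto simp: nth_list_update intro!: sum.cong)
  ultimately show ?thesis by simp
qed

lemma costN_split: "costN n w x = (\<Sum>i\<in>{i. i < n \<and> x ! i}. w i)"
proof -
  have eq: "{i. i < n \<and> x ! i} = {i\<in>{..<n}. x ! i}" by auto
  have "sum w {i\<in>{..<n}. x ! i} = (\<Sum>i<n. if x ! i then w i else 0)" by (rule sum.inter_filter) simp
  then show ?thesis unfolding costN_def eq by simp
qed

lemma Phi_le: "finite P \<Longrightarrow> x \<in> P \<Longrightarrow> Phi n w P \<le> costN n w x"
  unfolding Phi_def by auto

lemma Phi_in: "finite P \<Longrightarrow> P \<noteq> {} \<Longrightarrow> \<exists>m\<in>P. Phi n w P = costN n w m"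
proof -
  assume a: "finite P" "P \<noteq> {}"
  have "Min (costN n w ` P) \<in> costN n w ` P" using a by (intro Min_in) auto
  then show ?thesis unfolding Phi_def by blast
qed

lemma inv_D: assumes "popinv n E w P"
  shows "finite P" "P \<noteq> {}" "\<And>x. x \<in> P \<Longrightarrow> length x = n"
    "\<And>y z. y \<in> P \<Longrightarrow> z \<in> P \<Longrightarrow> y \<noteq> z \<Longrightarrow> \<not> fle (fit n E w y) (fit n E w z)"
  using assms unfolding popinv_def by blast+

lemma inv_card:
  assumes inst: "wvc_instance n E w" and ne: "E \<noteq> {}" and I: "popinv n E w P"
  shows "card P \<le> 2 * OPT n E w + 1"
proof -
  have injLP: "inj_on (LP n E w) P"
  proof
    fix y z assume yz: "y \<in> P" "z \<in> P" "LP n E w y = LP n E w z"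
    show "y = z"
    proof (rule ccontr)
      assume "y \<noteq> z"
      then have "\<not> fle (fit n E w y) (fit n E w z)" "\<not> fle (fit n E w z) (fit n E w y)"
        using inv_D(4)[OF I] yz by metis+
      then show False using yz(3) unfolding fle_def fit_def by auto
    qed
  qed
  have "LP n E w ` P \<subseteq> (\<lambda>k. real k / 2) ` {0..2 * OPT n E w}"
  proof
    fix v assume "v \<in> LP n E w ` P"
    then obtain x where "v = LP n E w x" by blast
    then obtain k where "v = real k / 2" "k \<le> 2 * OPT n E w" using LP_half[OF inst ne, of x] by blast
    then show "v \<in> (\<lambda>k. real k / 2) ` {0..2 * OPT n E w}" by auto
  qed
  then have "card (LP n E w ` P) \<le> card ((\<lambda>k. real k / 2) ` {0..2 * OPT n E w})"
    by (intro card_mono) auto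
  also have "\<dots> \<le> card {0..2 * OPT n E w}" by (rule card_image_le) simp
  finally show ?thesis using card_image[OF injLP] by simp
qed

lemma inv_gg:
  assumes I: "popinv n E w P" and len: "length x' = n"
  shows "popinv n E w (gg n E w P x')"
proof (cases "\<exists>y\<in>P. fle (fit n E w y) (fit n E w x')")
  case True then show ?thesis using I by (simp add: gg_def)
next
  case False
  then have x'P: "x' \<notin> P" by (auto simp: fle_def)
  have gg: "gg n E w P x' = insert x' {z \<in> P. \<not> fle (fit n E w x') (fit n E w z)}"
    using False by (simp add: gg_def)
  note fP = inv_D(1)[OF I] and lP = inv_D(3)[OF I] and aP = inv_D(4)[OF I]
  show ?thesis unfolding gg popinv_def
  proof (intro conjI ballI impI)
    fix y z assume y: "y \<in> insert x' {z \<in> P. \<not> fle (fit n E w x') (fit n E w z)}"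
      and z: "z \<in> insert x' {z \<in> P. \<not> fle (fit n E w x') (fit n E w z)}" and yz: "y \<noteq> z"
    show "\<not> fle (fit n E w y) (fit n E w z)"
    proof (cases "y = x'")
      case True
      then have "z \<in> P" "\<not> fle (fit n E w x') (fit n E w z)" using z yz by auto
      then show ?thesis using True by simp
    next
      case yx: False
      then have yP: "y \<in> P" using y by auto
      show ?thesis
      proof (cases "z = x'")
        case True then show ?thesis using False yP by auto
      next
        case False then have "z \<in> P" using z by auto
        then show ?thesis using aP yP yz by blast
      qed
    qed
  next
    show "finite (insert x' {z \<in> P. \<not> fle (fit n E w x') (fit n E w z)})" using fP by simp
  next
    fix x assume "x \<in> insert x' {z \<in> P. \<not> fle (fit n E w x') (fit n E w z)}"
    then show "length x = n" using lP len by auto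
  qed simp
qed

lemma Phi_gg_le:
  assumes I: "popinv n E w P"
  shows "Phi n w (gg n E w P x') \<le> Phi n w P"
proof -
  obtain m where m: "m \<in> P" "Phi n w P = costN n w m" using Phi_in inv_D(1,2)[OF I] by blast
  show ?thesis
  proof (cases "\<exists>y\<in>P. fle (fit n E w y) (fit n E w x')")
    case True then show ?thesis by (simp add: gg_def)
  next
    case False
    define Q where "Q = insert x' {z \<in> P. \<not> fle (fit n E w x') (fit n E w z)}"
    have gg: "gg n E w P x' = Q" using False by (simp add: gg_def Q_def)
    have fQ: "finite Q" using inv_D(1)[OF I] unfolding Q_def by simp
    show ?thesis
    proof (cases "fle (fit n E w x') (fit n E w m)")
      case True
      then have "costN n w x' \<le> costN n w m" by (rule fle_cost)
      moreover have "Phi n w Q \<le> costN n w x'" using fQ by (intro Phi_le) (auto simp: Q_def)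
      ultimately show ?thesis using gg m by simp
    next
      case False
      then have "m \<in> Q" using m unfolding Q_def by auto
      then show ?thesis using Phi_le[OF fQ] gg m by simp
    qed
  qed
qed

lemma Phi_gg_acc:
  assumes I: "popinv n E w P" and lt: "costN n w x' < Phi n w P"
  shows "Phi n w (gg n E w P x') \<le> costN n w x'"
proof -
  have fP: "finite P" using inv_D(1)[OF I] .
  have "\<not> (\<exists>y\<in>P. fle (fit n E w y) (fit n E w x'))"
  proof
    assume "\<exists>y\<in>P. fle (fit n E w y) (fit n E w x')"
    then obtain y where y: "y \<in> P" "fle (fit n E w y) (fit n E w x')" by blast
    have "costN n w y \<le> costN n w x'" using fle_cost[OF y(2)] .
    moreover have "Phi n w P \<le> costN n w y" using Phi_le[OF fP y(1)] .
    ultimately show False using lt by linarith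
  qed
  then have gg: "gg n E w P x' = insert x' {z \<in> P. \<not> fle (fit n E w x') (fit n E w z)}"
    by (simp add: gg_def)
  show ?thesis unfolding gg using fP by (intro Phi_le) auto
qed




definition qq :: "nat \<Rightarrow> real" where "qq n = (1 / real n) * (1 - 1 / real n) ^ (n - 1)"

lemma n_ge2: assumes "wvc_instance n E w" "E \<noteq> {}" shows "n \<ge> 2"
proof -
  obtain e where e: "e \<in> E" using assms by auto
  then have "e \<subseteq> {0..<n}" "card e = 2" using assms unfolding wvc_instance_def by auto
  then have "2 \<le> card {0..<n}" by (metis card_mono finite_atLeastLessThan)
  then show ?thesis by simp
qed

lemma qq_bounds: assumes "n \<ge> 2" shows "0 \<le> qq n" "qq n \<le> 1"
proof -
  have a: "0 \<le> 1 - 1 / real n" "1 - 1 / real n \<le> 1" "0 \<le> 1 / real n" "1 / real n \<le> 1"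
    using assms by auto
  show "0 \<le> qq n" unfolding qq_def using a by simp
  have "(1 - 1 / real n) ^ (n - 1) \<le> 1" using a by (simp add: power_le_one)
  then show "qq n \<le> 1" unfolding qq_def using a
    by (intro mult_le_one) (auto intro: zero_le_power)
qed

lemma F_le:
  assumes I: "popinv n E w P"
  shows "(\<integral>\<^sup>+x'. ennreal (real (Phi n w (gg n E w P x'))) \<partial>measure_pmf M) \<le> ennreal (real (Phi n w P))"
proof -
  have "(\<integral>\<^sup>+x'. ennreal (real (Phi n w (gg n E w P x'))) \<partial>measure_pmf M)
      \<le> (\<integral>\<^sup>+x'. ennreal (real (Phi n w P)) \<partial>measure_pmf M)"
    using Phi_gg_le[OF I] by (intro nn_integral_mono) (simp add: ennreal_leI)
  also have "\<dots> = ennreal (real (Phi n w P))" by (simp add: measure_pmf.emeasure_space_1)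
  finally show ?thesis .
qed

lemma F_m:
  assumes inst: "wvc_instance n E w" and ne: "E \<noteq> {}" and I: "popinv n E w P"
    and m: "m \<in> P" "Phi n w P = costN n w m"
  shows "(\<integral>\<^sup>+x'. ennreal (real (Phi n w (gg n E w P x'))) \<partial>measure_pmf (mutate (1 / real n) m))
         \<le> ennreal (real (Phi n w P) * (1 - qq n))"
proof -
  define M where "M = mutate (1 / real n) m"
  define Phi0 where "Phi0 = real (Phi n w P)"
  define h where "h a = real (Phi n w (gg n E w P a)) * pmf M a" for a
  define L where "L = {y :: bool list. length y = n}"
  have n2: "n \<ge> 2" using n_ge2[OF inst ne] .
  have p: "0 \<le> 1 / real n" "1 / real n \<le> 1" using n2 by auto
  have lm: "length m = n" using inv_D(3)[OF I m(1)] .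
  have finL: "finite L" unfolding L_def by (rule finite_len)
  have supp: "set_pmf M \<subseteq> L" unfolding M_def L_def using mutate_len lm by blast
  have "(\<integral>\<^sup>+x'. ennreal (real (Phi n w (gg n E w P x'))) \<partial>measure_pmf M)
      = (\<Sum>a\<in>L. ennreal (real (Phi n w (gg n E w P a))) * ennreal (pmf M a))"
    using supp finL by (intro nn_integral_measure_pmf_support) auto
  also have "\<dots> = (\<Sum>a\<in>L. ennreal (h a))"
    unfolding h_def by (intro sum.cong refl) (simp add: ennreal_mult)
  also have "\<dots> = ennreal (sum h L)" by (intro sum_ennreal) (simp add: h_def)
  finally have eq: "(\<integral>\<^sup>+x'. ennreal (real (Phi n w (gg n E w P x'))) \<partial>measure_pmf M) = ennreal (sum h L)" .
  define Iset where "Iset = {i. i < n \<and> m ! i}"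
  define fl where "fl i = m[i := False]" for i
  define Fset where "Fset = fl ` Iset"
  have finI: "finite Iset" unfolding Iset_def by simp
  have FL: "Fset \<subseteq> L" unfolding Fset_def fl_def L_def using lm by auto
  have injfl: "inj_on fl Iset"
  proof
    fix i j assume ij: "i \<in> Iset" "j \<in> Iset" "fl i = fl j"
    show "i = j"
    proof (rule ccontr)
      assume "i \<noteq> j"
      then have "fl j ! i = m ! i" unfolding fl_def by simp
      moreover have "fl i ! i = False" using ij(1) lm unfolding fl_def Iset_def by simp
      ultimately show False using ij unfolding Iset_def by simp
    qed
  qed
  have pmf_fl: "pmf M (fl i) = qq n" if "i \<in> Iset" for i
    using pmf_flip[OF p, of i m] that lm unfolding M_def fl_def Iset_def qq_def by simp
  have h_fl: "h (fl i) \<le> (Phi0 - real (w i)) * qq n" if "i \<in> Iset" for i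
  proof -
    have i: "i < n" "m ! i" using that Iset_def by auto
    have c: "costN n w (fl i) + w i = costN n w m" unfolding fl_def using costN_flip[OF i lm] .
    have "w i > 0" using inst i unfolding wvc_instance_def by auto
    then have "costN n w (fl i) < Phi n w P" using c m(2) by linarith
    then have "Phi n w (gg n E w P (fl i)) \<le> costN n w (fl i)" by (rule Phi_gg_acc[OF I])
    then have "real (Phi n w (gg n E w P (fl i))) \<le> Phi0 - real (w i)"
      using c m(2) unfolding Phi0_def by linarith
    moreover have "0 \<le> qq n" using qq_bounds[OF n2] by simp
    ultimately show ?thesis unfolding h_def pmf_fl[OF that] by (rule mult_right_mono)
  qed
  have "sum h L = sum h Fset + sum h (L - Fset)"
    using finL FL by (metis add.commute sum.subset_diff)
  also have "sum h Fset = (\<Sum>i\<in>Iset. h (fl i))" unfolding Fset_def using injfl by (simp add: sum.reindex)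
  also have "\<dots> \<le> (\<Sum>i\<in>Iset. (Phi0 - real (w i)) * qq n)" using h_fl by (intro sum_mono) auto
  also have "\<dots> = (\<Sum>i\<in>Iset. Phi0 * qq n) - qq n * (\<Sum>i\<in>Iset. real (w i))"
    by (simp add: algebra_simps sum_subtractf sum_distrib_left)
  also have "(\<Sum>i\<in>Iset. Phi0 * qq n) = (\<Sum>i\<in>Iset. Phi0 * pmf M (fl i))"
    using pmf_fl by simp
  also have "\<dots> = (\<Sum>a\<in>Fset. Phi0 * pmf M a)" unfolding Fset_def using injfl by (simp add: sum.reindex)
  also have "(\<Sum>i\<in>Iset. real (w i)) = Phi0"
    unfolding Phi0_def m(2) costN_split Iset_def by simp
  also have "sum h (L - Fset) \<le> (\<Sum>a\<in>L - Fset. Phi0 * pmf M a)"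
    unfolding h_def Phi0_def using Phi_gg_le[OF I] by (intro sum_mono mult_right_mono) auto
  finally have "sum h L \<le> (\<Sum>a\<in>Fset. Phi0 * pmf M a) + (\<Sum>a\<in>L - Fset. Phi0 * pmf M a) - qq n * Phi0"
    by simp
  also have "(\<Sum>a\<in>Fset. Phi0 * pmf M a) + (\<Sum>a\<in>L - Fset. Phi0 * pmf M a) = (\<Sum>a\<in>L. Phi0 * pmf M a)"
    using finL FL by (metis add.commute sum.subset_diff)
  also have "\<dots> = Phi0" using sum_pmf_eq_1[OF finL supp] by (simp add: sum_distrib_left[symmetric])
  finally have "sum h L \<le> Phi0 * (1 - qq n)" by (simp add: algebra_simps)
  then show ?thesis unfolding M_def[symmetric] eq Phi0_def by (simp add: ennreal_leI)
qed




definition dd :: "nat \<Rightarrow> nat set set \<Rightarrow> (nat \<Rightarrow> nat) \<Rightarrow> real" where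
  "dd n E w = qq n / real (2 * OPT n E w + 1)"

lemma dd_bounds: assumes "n \<ge> 2" shows "0 \<le> dd n E w" "dd n E w \<le> 1"
proof -
  have q: "0 \<le> qq n" "qq n \<le> 1" using qq_bounds[OF assms] .
  show "0 \<le> dd n E w" unfolding dd_def using q by simp
  have "qq n / real (2 * OPT n E w + 1) \<le> qq n / 1" using q by (intro divide_left_mono) auto
  then show "dd n E w \<le> 1" unfolding dd_def using q by linarith
qed

lemma drift:
  assumes inst: "wvc_instance n E w" and ne: "E \<noteq> {}" and I: "popinv n E w P"
  shows "(\<integral>\<^sup>+P'. ennreal (real (Phi n w P')) \<partial>measure_pmf (stopped_step n E w P))
         \<le> ennreal ((1 - dd n E w) * real (Phi n w P))"
proof (cases "zeros n \<in> P")
  case True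
  have "Phi n w P = 0" using Phi_le[OF inv_D(1)[OF I] True, of n w] costN_zeros[of n w] by simp
  then show ?thesis using True by (simp add: stopped_step_def)
next
  case False
  have n2: "n \<ge> 2" using n_ge2[OF inst ne] .
  note fP = inv_D(1)[OF I] and neP = inv_D(2)[OF I]
  obtain m where m: "m \<in> P" "Phi n w P = costN n w m" using Phi_in[OF fP neP] by blast
  define Phi0 where "Phi0 = real (Phi n w P)"
  define F where "F x = (\<integral>\<^sup>+x'. ennreal (real (Phi n w (gg n E w P x'))) \<partial>measure_pmf (mutate (1 / real n) x))" for x
  define c where "c x = (if x = m then Phi0 * (1 - qq n) else Phi0)" for x
  have q: "0 \<le> qq n" "qq n \<le> 1" using qq_bounds[OF n2] .
  have c0: "0 \<le> c x" for x unfolding c_def Phi0_def using q by simp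
  have Fc: "F x \<le> ennreal (c x)" if "x \<in> P" for x
  proof (cases "x = m")
    case True then show ?thesis unfolding F_def c_def Phi0_def using F_m[OF inst ne I m] by simp
  next
    case False then show ?thesis unfolding F_def c_def Phi0_def using F_le[OF I] by simp
  qed
  have "(\<integral>\<^sup>+P'. ennreal (real (Phi n w P')) \<partial>measure_pmf (stopped_step n E w P)) = sum F P / of_nat (card P)"
    using False unfolding stopped_step_def semo_step_gg F_def
    by (simp add: nn_integral_pmf_of_set[OF neP fP])
  also have "\<dots> \<le> (\<Sum>x\<in>P. ennreal (c x)) / of_nat (card P)"
    using Fc by (intro divide_right_mono_ennreal sum_mono) auto
  also have "(\<Sum>x\<in>P. ennreal (c x)) = ennreal (sum c P)" using c0 by simp
  also have "sum c P = real (card P) * Phi0 - qq n * Phi0"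
  proof -
    have "sum c P = c m + sum c (P - {m})" using fP m(1) by (simp add: sum.remove)
    also have "sum c (P - {m}) = real (card P - 1) * Phi0" unfolding c_def using fP m(1) by (simp add: card_Diff_singleton)
    finally show ?thesis using m(1) fP neP unfolding c_def
      by (simp add: algebra_simps of_nat_diff card_gt_0_iff Suc_leI)
  qed
  also have "ennreal (real (card P) * Phi0 - qq n * Phi0) / of_nat (card P)
       = ennreal ((real (card P) * Phi0 - qq n * Phi0) / real (card P))"
  proof -
    have cp: "card P > 0" using fP neP by (simp add: card_gt_0_iff)
    have "real (card P) * Phi0 - qq n * Phi0 \<ge> 0"
    proof -
      have "qq n \<le> real (card P)" using q cp by linarith
      then have "qq n * Phi0 \<le> real (card P) * Phi0" by (rule mult_right_mono) (simp add: Phi0_def)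
      then show ?thesis by simp
    qed
    then show ?thesis using cp by (simp add: divide_ennreal ennreal_of_nat_eq_real_of_nat)
  qed
  also have "\<dots> \<le> ennreal ((1 - dd n E w) * Phi0)"
  proof (rule ennreal_leI)
    have cp: "card P > 0" using fP neP by (simp add: card_gt_0_iff)
    have cb: "real (card P) \<le> real (2 * OPT n E w + 1)" using inv_card[OF inst ne I] by linarith
    have P0: "0 \<le> Phi0" unfolding Phi0_def by simp
    have "qq n / real (2 * OPT n E w + 1) \<le> qq n / real (card P)"
      using cb cp q by (intro divide_left_mono) auto
    then have "(1 - qq n / real (card P)) * Phi0 \<le> (1 - dd n E w) * Phi0"
      unfolding dd_def using P0 by (intro mult_right_mono) auto
    moreover have "(real (card P) * Phi0 - qq n * Phi0) / real (card P) = (1 - qq n / real (card P)) * Phi0"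
      using cp by (simp add: field_simps)
    ultimately show "(real (card P) * Phi0 - qq n * Phi0) / real (card P) \<le> (1 - dd n E w) * Phi0" by simp
  qed
  finally show ?thesis unfolding Phi0_def .
qed




lemma inv_step:
  assumes I: "popinv n E w P" and P': "P' \<in> set_pmf (stopped_step n E w P)"
  shows "popinv n E w P'"
proof (cases "zeros n \<in> P")
  case True then show ?thesis using I P' by (simp add: stopped_step_def)
next
  case False
  then obtain x x' where x: "x \<in> P" "x' \<in> set_pmf (mutate (1 / real n) x)" "P' = gg n E w P x'"
    using P' inv_D(1,2)[OF I] by (auto simp: stopped_step_def semo_step_gg)
  have "length x' = n" using mutate_len[OF x(2)] inv_D(3)[OF I x(1)] by simp
  then show ?thesis using inv_gg[OF I] x(3) by simp
qed

lemma run_inv: "P \<in> set_pmf (semo_run n E w t) \<Longrightarrow> popinv n E w P"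
proof (induction t arbitrary: P)
  case 0
  have ne: "{x :: bool list. length x = n} \<noteq> {}" by (metis (mono_tags) empty_iff length_replicate mem_Collect_eq)
  from 0 obtain x where "P = {x}" "length x = n"
    using finite_len[of n] ne by (auto simp: init_pmf_def)
  then show ?case unfolding popinv_def by simp
next
  case (Suc t)
  then obtain Q where "Q \<in> set_pmf (semo_run n E w t)" "P \<in> set_pmf (stopped_step n E w Q)" by auto
  then show ?case using Suc.IH inv_step by blast
qed

lemma run_exp:
  assumes inst: "wvc_instance n E w" and ne: "E \<noteq> {}"
  shows "(\<integral>\<^sup>+P. ennreal (real (Phi n w P)) \<partial>measure_pmf (semo_run n E w t))
          \<le> ennreal ((1 - dd n E w) ^ t * real (n * Wmax n w))"
proof (induction t)
  case 0
  have "(\<integral>\<^sup>+P. ennreal (real (Phi n w P)) \<partial>measure_pmf (semo_run n E w 0))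
      = (\<integral>\<^sup>+x. ennreal (real (Phi n w {x})) \<partial>measure_pmf (init_pmf n))" by simp
  also have "\<dots> \<le> (\<integral>\<^sup>+x. ennreal (real (n * Wmax n w)) \<partial>measure_pmf (init_pmf n))"
  proof (intro nn_integral_mono ennreal_leI)
    fix x :: "bool list"
    have "Phi n w {x} = costN n w x" unfolding Phi_def by simp
    then show "real (Phi n w {x}) \<le> real (n * Wmax n w)" using costN_le[of n w x] by (metis of_nat_le_iff)
  qed
  also have "\<dots> = ennreal (real (n * Wmax n w))" by (simp add: measure_pmf.emeasure_space_1)
  finally show ?case by simp
next
  case (Suc t)
  have d: "0 \<le> 1 - dd n E w" using dd_bounds(2)[OF n_ge2[OF inst ne]] by simp
  have "(\<integral>\<^sup>+P. ennreal (real (Phi n w P)) \<partial>measure_pmf (semo_run n E w (Suc t)))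
      = (\<integral>\<^sup>+Q. (\<integral>\<^sup>+P. ennreal (real (Phi n w P)) \<partial>measure_pmf (stopped_step n E w Q)) \<partial>measure_pmf (semo_run n E w t))"
    by simp
  also have "\<dots> \<le> (\<integral>\<^sup>+Q. ennreal (1 - dd n E w) * ennreal (real (Phi n w Q)) \<partial>measure_pmf (semo_run n E w t))"
  proof (intro nn_integral_mono_AE AE_pmfI)
    fix Q assume "Q \<in> set_pmf (semo_run n E w t)"
    then have "popinv n E w Q" by (rule run_inv)
    from drift[OF inst ne this] d
    show "(\<integral>\<^sup>+P. ennreal (real (Phi n w P)) \<partial>measure_pmf (stopped_step n E w Q))
          \<le> ennreal (1 - dd n E w) * ennreal (real (Phi n w Q))" by (simp add: ennreal_mult)
  qed
  also have "\<dots> = ennreal (1 - dd n E w) * (\<integral>\<^sup>+Q. ennreal (real (Phi n w Q)) \<partial>measure_pmf (semo_run n E w t))"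
    by (rule nn_integral_cmult) simp
  also have "\<dots> \<le> ennreal (1 - dd n E w) * ennreal ((1 - dd n E w) ^ t * real (n * Wmax n w))"
    by (intro mult_left_mono Suc.IH) simp
  also have "\<dots> = ennreal ((1 - dd n E w) ^ Suc t * real (n * Wmax n w))"
    using d by (simp add: ennreal_mult[symmetric] mult.assoc)
  finally show ?case .
qed

lemma prob_bound:
  assumes inst: "wvc_instance n E w" and ne: "E \<noteq> {}"
  shows "measure_pmf.prob (semo_run n E w t) {P. zeros n \<notin> P} \<le> (1 - dd n E w) ^ t * real (n * Wmax n w)"
proof -
  have pos: "\<forall>i<n. 0 < w i" using inst unfolding wvc_instance_def by auto
  have "ennreal (measure_pmf.prob (semo_run n E w t) {P. zeros n \<notin> P})
      = emeasure (measure_pmf (semo_run n E w t)) {P. zeros n \<notin> P}"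
    by (simp add: measure_pmf.emeasure_eq_measure)
  also have "\<dots> = (\<integral>\<^sup>+P. indicator {P. zeros n \<notin> P} P \<partial>measure_pmf (semo_run n E w t))"
    by simp
  also have "\<dots> \<le> (\<integral>\<^sup>+P. ennreal (real (Phi n w P)) \<partial>measure_pmf (semo_run n E w t))"
  proof (intro nn_integral_mono_AE AE_pmfI)
    fix P assume "P \<in> set_pmf (semo_run n E w t)"
    then have I: "popinv n E w P" by (rule run_inv)
    show "indicator {P. zeros n \<notin> P} P \<le> ennreal (real (Phi n w P))"
    proof (cases "zeros n \<in> P")
      case True then show ?thesis by simp
    next
      case False
      obtain m where m: "m \<in> P" "Phi n w P = costN n w m" using Phi_in[OF inv_D(1,2)[OF I]] by blast
      have "costN n w m \<noteq> 0" using costN_zero_iff[OF pos inv_D(3)[OF I m(1)]] m(1) False by auto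
      then have "1 \<le> real (Phi n w P)" using m(2) by simp
      then show ?thesis using False by simp
    qed
  qed
  also have "\<dots> \<le> ennreal ((1 - dd n E w) ^ t * real (n * Wmax n w))" by (rule run_exp[OF inst ne])
  finally have le: "ennreal (measure_pmf.prob (semo_run n E w t) {P. zeros n \<notin> P}) \<le> ennreal ((1 - dd n E w) ^ t * real (n * Wmax n w))" .
  have "0 \<le> (1 - dd n E w) ^ t * real (n * Wmax n w)"
    using dd_bounds(2)[OF n_ge2[OF inst ne]] by simp
  then show ?thesis using le ennreal_le_iff by blast
qed




lemma q_lower:
  assumes n2: "n \<ge> 2"
  shows "1 \<le> (1 - 1 / real n) ^ (n - 1) * exp 1"
proof -
  define m where "m = n - 1"
  have m1: "real m \<ge> 1" using n2 unfolding m_def by simp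
  have nm: "real n = real m + 1" using n2 unfolding m_def by simp
  have "1 + 1 / real m \<le> exp (1 / real m)" using exp_ge_add_one_self by simp
  then have "(1 + 1 / real m) ^ m \<le> exp (1 / real m) ^ m"
    using m1 by (intro power_mono) auto
  also have "\<dots> = exp (real m * (1 / real m))" by (rule exp_of_nat_mult[symmetric])
  also have "\<dots> = exp 1" using m1 by simp
  finally have a: "(1 + 1 / real m) ^ m \<le> exp 1" .
  have mm: "real m + real m * real m \<noteq> 0" using m1 by (smt (verit) mult_nonneg_nonneg)
  have b: "(1 - 1 / real n) * (1 + 1 / real m) = 1" using m1 nm mm by (simp add: field_simps)
  have "1 = ((1 - 1 / real n) * (1 + 1 / real m)) ^ m" using b by simp
  also have "\<dots> = (1 - 1 / real n) ^ m * (1 + 1 / real m) ^ m" by (simp add: power_mult_distrib)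
  also have "\<dots> \<le> (1 - 1 / real n) ^ m * exp 1"
    using a n2 by (intro mult_left_mono) auto
  finally show ?thesis unfolding m_def .
qed

lemma dd_inv:
  assumes inst: "wvc_instance n E w" and ne: "E \<noteq> {}"
  shows "dd n E w > 0" "1 / dd n E w \<le> 9 * real (OPT n E w) * real n"
proof -
  have n2: "n \<ge> 2" using n_ge2[OF inst ne] .
  have O1: "OPT n E w \<ge> 1" using OPT_props(2)[OF inst ne] .
  define q' where "q' = (1 - 1 / real n) ^ (n - 1)"
  have q'pos: "q' > 0" unfolding q'_def using n2 by simp
  have qq: "qq n = q' / real n" unfolding qq_def q'_def by simp
  show dpos: "dd n E w > 0" unfolding dd_def qq using q'pos n2 by simp
  have "q' * exp 1 \<le> q' * 3" using exp_le q'pos by (intro mult_left_mono) auto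
  then have q3: "1 \<le> q' * 3" using q_lower[OF n2] unfolding q'_def[symmetric] by linarith
  have iq: "1 / q' \<le> 3" using q3 q'pos by (simp add: divide_le_eq mult.commute)
  define K where "K = real (2 * OPT n E w + 1) * real n"
  have K0: "K \<ge> 0" unfolding K_def by simp
  have "1 / dd n E w = K * (1 / q')"
    unfolding dd_def qq K_def using q'pos n2 by (simp add: field_simps)
  also have "\<dots> \<le> K * 3" using iq K0 by (rule mult_left_mono)
  also have "\<dots> \<le> 9 * real (OPT n E w) * real n"
  proof -
    have a: "real (2 * OPT n E w + 1) \<le> 3 * real (OPT n E w)" using O1 by simp
    have "K \<le> 3 * (real (OPT n E w) * real n)" unfolding K_def
      using mult_right_mono[OF a, of "real n"] by simp
    then show ?thesis by linarith
  qed
  finally show "1 / dd n E w \<le> 9 * real (OPT n E w) * real n" .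
qed

lemma main_bound:
  assumes inst: "wvc_instance n E w" and ne: "E \<noteq> {}"
  shows "expected_time_zeros n E w
          \<le> ennreal (30 * real (OPT n E w) * real n * (ln (real (Wmax n w)) + ln (real n)))"
proof -
  have n2: "n \<ge> 2" using n_ge2[OF inst ne] .
  have O1: "OPT n E w \<ge> 1" using OPT_props(2)[OF inst ne] .
  define d where "d = dd n E w"
  have dpos: "d > 0" and dinv: "1 / d \<le> 9 * real (OPT n E w) * real n"
    using dd_inv[OF inst ne] unfolding d_def by auto
  have d1: "d \<le> 1" using dd_bounds(2)[OF n2] unfolding d_def .
  define r where "r = 1 - d"
  have r0: "0 \<le> r" "r < 1" using dpos d1 unfolding r_def by auto
  have W1: "Wmax n w \<ge> 1"
  proof -
    have "w 0 \<le> Wmax n w" unfolding Wmax_def using n2 by (intro Max_ge) auto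
    moreover have "w 0 > 0" using inst n2 unfolding wvc_instance_def by auto
    ultimately show ?thesis by linarith
  qed
  define A where "A = real (n * Wmax n w)"
  define LA where "LA = ln (real (Wmax n w)) + ln (real n)"
  have Apos: "A > 0" unfolding A_def using n2 W1 by simp
  have lnA: "ln A = LA" unfolding A_def LA_def using n2 W1 by (simp add: ln_mult)
  have LA2: "LA \<ge> 1/2"
  proof -
    have "ln (1/2 :: real) \<le> 1/2 - 1" by (rule ln_le_minus_one) simp
    then have "ln (2::real) \<ge> 1/2" by (simp add: ln_div)
    moreover have "ln (real n) \<ge> ln 2" using n2 by simp
    moreover have "ln (real (Wmax n w)) \<ge> 0" using W1 by simp
    ultimately show ?thesis unfolding LA_def by linarith
  qed
  define T where "T = nat \<lceil>ln A / d\<rceil>"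
  have T_ge: "ln A / d \<le> real T" unfolding T_def by (rule real_nat_ceiling_ge)
  have T_le: "real T \<le> ln A / d + 1"
  proof -
    have "ln A / d \<ge> 0" using lnA LA2 dpos by simp
    then have "real T = real_of_int \<lceil>ln A / d\<rceil>" unfolding T_def by simp
    also have "\<dots> \<le> ln A / d + 1" by linarith
    finally show ?thesis .
  qed
  have rTA: "r ^ T * A \<le> 1"
  proof -
    have "r \<le> exp (- d)" using exp_ge_add_one_self[of "-d"] unfolding r_def by simp
    then have "r ^ T \<le> exp (- d) ^ T" using r0 by (intro power_mono) auto
    also have "\<dots> = exp (real T * (- d))" by (rule exp_of_nat_mult[symmetric])
    also have "\<dots> \<le> exp (- ln A)"
    proof -
      have "ln A \<le> real T * d" using T_ge dpos by (simp add: divide_le_eq)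
      then show ?thesis by simp
    qed
    also have "\<dots> = 1 / A" using Apos by (simp add: exp_minus inverse_eq_divide)
    finally have "r ^ T \<le> 1 / A" .
    then show ?thesis using Apos by (simp add: le_divide_eq)
  qed
  define g where "g t = (if t < T then 1 else r ^ (t - T))" for t
  have g0: "0 \<le> g t" for t unfolding g_def using r0 by simp
  have prob_g: "measure_pmf.prob (semo_run n E w t) {P. zeros n \<notin> P} \<le> g t" for t
  proof (cases "t < T")
    case True then show ?thesis unfolding g_def by simp
  next
    case False
    have "measure_pmf.prob (semo_run n E w t) {P. zeros n \<notin> P} \<le> r ^ t * A"
      using prob_bound[OF inst ne, of t] unfolding r_def d_def A_def .
    also have "\<dots> = r ^ (t - T) * (r ^ T * A)" using False by (simp add: power_add[symmetric])
    also have "\<dots> \<le> r ^ (t - T) * 1" using rTA r0 by (intro mult_left_mono) auto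
    finally show ?thesis unfolding g_def using False by simp
  qed
  have gshift: "(\<lambda>t. g (t + T)) = (\<lambda>t. r ^ t)" unfolding g_def by auto
  have sumg: "summable g"
    using summable_geometric[of r] r0 gshift summable_iff_shift[of g T] by simp
  have "suminf g = (\<Sum>t. g (t + T)) + (\<Sum>t<T. g t)" by (rule suminf_split_initial_segment[OF sumg])
  also have "(\<Sum>t. g (t + T)) = 1 / (1 - r)" unfolding gshift using r0 by (simp add: suminf_geometric)
  also have "(\<Sum>t<T. g t) = real T" unfolding g_def by simp
  finally have sg: "suminf g = 1 / d + real T" unfolding r_def by simp
  have "expected_time_zeros n E w \<le> (\<Sum>t. ennreal (g t))"
    unfolding expected_time_zeros_def
    by (intro suminf_le ennreal_leI prob_g) auto
  also have "\<dots> = ennreal (suminf g)" using g0 sumg by (rule suminf_ennreal2)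
  also have "\<dots> \<le> ennreal (30 * real (OPT n E w) * real n * LA)"
  proof (rule ennreal_leI)
    define X where "X = real (OPT n E w) * real n"
    have "1 \<le> OPT n E w * n" using O1 n2 by (metis le_trans mult_le_mono nat_mult_1 one_le_numeral)
    then have X1: "X \<ge> 1" unfolding X_def by (metis of_nat_1 of_nat_le_iff of_nat_mult)
    have a: "1 / d \<le> 9 * X" using dinv unfolding X_def by simp
    have LA0: "LA \<ge> 0" using LA2 by simp
    have b: "ln A / d \<le> LA * (9 * X)" unfolding lnA
      using mult_left_mono[OF a LA0] by simp
    have c: "9 * X \<le> 18 * (X * LA)" using mult_left_mono[OF LA2, of X] X1 by simp
    have "1 * (1/2) \<le> X * LA" using mult_mono[OF X1 LA2] LA0 X1 by simp
    then have e: "1 \<le> 2 * (X * LA)" by simp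
    have "suminf g \<le> 1 / d + ln A / d + 1" using sg T_le by simp
    also have "\<dots> \<le> 29 * (X * LA)" using a b c e by (simp add: algebra_simps)
    also have "\<dots> \<le> 30 * (X * LA)" using X1 LA0 by simp
    finally show "suminf g \<le> 30 * real (OPT n E w) * real n * LA" unfolding X_def by (simp add: algebra_simps)
  qed
  finally show ?thesis unfolding LA_def .
qed

theorem lemma4:
  "\<exists>C::real. C > 0 \<and>
     (\<forall>n E w. wvc_instance n E w \<and> E \<noteq> {} \<longrightarrow>
        expected_time_zeros n E w
          \<le> ennreal (C * real (OPT n E w) * real n * (ln (real (Wmax n w)) + ln (real n))))"
  by (rule exI[of _ 30]) (auto intro: main_bound)


end
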